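(* For every $J\subseteq[n]$ and every $i\in[n]$, the element $q_{J,i}$ lies in $SI^B_n$. Moreover $q_{J,i}\in\bigoplus_{K:\,|K|=|J|,\ J\le_{\mathrm{Gale}}K}\mathbb C[\mathbf x_n]\cdot\theta_K$, and its component in $\mathbb C[\mathbf x_n]\cdot\theta_J$ equals $\pm\,p_{J,i}\cdot\theta_J$.
   Context: Let $n\ge1$, $\mathbb C[\mathbf x_n]=\mathbb C[x_1,\dots,x_n]$. The superspace is $\Omega_n=\mathbb C[\mathbf x_n]\otimes\wedge\{\theta_1,\dots,\theta_n\}$: the $\theta_i$ anticommute among themselves and commute with the $x_j$. For $J=\{j_1<\dots<j_k\}\subseteq[n]$, $\theta_J=\theta_{j_1}\cdots\theta_{j_k}$; every element of $\Omega_n$ is uniquely $\sum_J f_J\theta_J$ with $f_J\in\mathbb C[\mathbf x_n]$. The group $\mathfrak B_n$ of signed permutations (bijections $\pi$ of $\{\pm1,\dots,\pm n\}$ with $\pi(-i)=-\pi(i)$) acts on $\Omega_n$ by algebra automorphisms via $\pi(x_i)=x_{\pi(i)}$, $\pi(\theta_i)=\theta_{\pi(i)}$, with $x_{-i}=-x_i$, $\theta_{-i}=-\theta_i$. $SI^B_n$ is the ideal of $\Omega_n$ generated by the $\mathfrak B_n$-invariant elements with zero constant term. The operator $\partial_i$ acts on $\Omega_n$ as $\partial/\partial x_i$, treating the $\theta$'s as constants, and $d(f)=\sum_{i=1}^n\partial_i(f)\,\theta_i$. Gale order: for subsets of equal size $\{a_1<\dots<a_r\}\le_{\mathrm{Gale}}\{b_1<\dots<b_r\}$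 iff $a_s\le b_s$ for all $s$. For $S\subseteq[n]$ and an integer $r$, $h^2_r(S)$ is the complete homogeneous symmetric polynomial of degree $r$ in the variables $\{x_s^2:s\in S\}$ (with $h^2_0(S)=1$ and $h^2_r(S)=0$ for $r<0$). For $J\subseteq[n]$ and $i\in[n]$ put $r_i=n-|J\cup\{i,\dots,n\}|+1$, and define $q_{J,i}=h^2_{r_i}(J\cup\{i,\dots,n\})\cdot\theta_J$ if $i\notin J$, $q_{J,i}=d\big(h^2_{r_i}(J\cup\{i,\dots,n\})\big)\cdot\theta_{J\setminus\{i\}}$ if $i\in J$; and $p_{J,i}=h^2_{r_i}(J\cup\{i,\dots,n\})$ if $i\notin J$, $p_{J,i}=\partial_i h^2_{r_i}(J\cup\{i,\dots,n\})$ if $i\in J$. *)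

theory Defs
  imports Complex_Main "HOL-Library.Poly_Mapping"
begin

text \<open>A monomial is an exponent vector nat =>0 nat (variable x_i has index i, i >= 1);
  a polynomial is a finitely supported map from monomials to complex coefficients,
  with the convolution product from HOL-Library.Poly_Mapping.\<close>

type_synonym mpoly = "(nat \<Rightarrow>\<^sub>0 nat) \<Rightarrow>\<^sub>0 complex"

definition Const :: "complex \<Rightarrow> mpoly" where
  "Const c = Poly_Mapping.single 0 c"

definition Var :: "nat \<Rightarrow> mpoly" where
  "Var i = Poly_Mapping.single (Poly_Mapping.single i 1) 1"

definition in_polyring :: "nat \<Rightarrow> mpoly \<Rightarrow> bool" where
  "in_polyring n p \<longleftrightarrow> (\<forall>m \<in> Poly_Mapping.keys p. Poly_Mapping.keys m \<subseteq> {1..n})"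

definition subst :: "(nat \<Rightarrow> mpoly) \<Rightarrow> mpoly \<Rightarrow> mpoly" where
  "subst s p = (\<Sum>m \<in> Poly_Mapping.keys p.
      Const (Poly_Mapping.lookup p m) *
      (\<Prod>i \<in> Poly_Mapping.keys m. s i ^ Poly_Mapping.lookup m i))"

definition pd :: "nat \<Rightarrow> mpoly \<Rightarrow> mpoly" where
  "pd i p = (\<Sum>m \<in> Poly_Mapping.keys p.
      Poly_Mapping.single (m - Poly_Mapping.single i 1)
        (of_nat (Poly_Mapping.lookup m i) * Poly_Mapping.lookup p m))"

text \<open>h^2_r(S): complete homogeneous symmetric polynomial of degree r in the x_s^2, s in S\<close>
definition h2 :: "int \<Rightarrow> nat set \<Rightarrow> mpoly" where
  "h2 r S = (if r < 0 then 0 else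
     (\<Sum>m \<in> {m :: nat \<Rightarrow>\<^sub>0 nat. Poly_Mapping.keys m \<subseteq> S \<and>
                             (\<Sum>s\<in>S. Poly_Mapping.lookup m s) = nat r}.
        (\<Prod>s\<in>S. Var s ^ (2 * Poly_Mapping.lookup m s))))"

text \<open>An element sum_J f_J theta_J is represented by its coefficient function J |-> f_J.\<close>

type_synonym sup = "nat set \<Rightarrow> mpoly"

definition omega :: "nat \<Rightarrow> sup \<Rightarrow> bool" where
  "omega n F \<longleftrightarrow> (\<forall>J. F J \<noteq> 0 \<longrightarrow> J \<subseteq> {1..n}) \<and> (\<forall>J. in_polyring n (F J))"

definition szero :: sup where "szero = (\<lambda>_. 0)"

definition sadd :: "sup \<Rightarrow> sup \<Rightarrow> sup" where "sadd F G = (\<lambda>K. F K + G K)"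

definition sneg :: "sup \<Rightarrow> sup" where "sneg F = (\<lambda>K. - F K)"

text \<open>theta_J (J ordered increasingly)\<close>
definition theta :: "nat set \<Rightarrow> sup" where
  "theta J = (\<lambda>K. if K = J then 1 else 0)"

definition emb :: "mpoly \<Rightarrow> sup" where
  "emb f = (\<lambda>K. if K = {} then f else 0)"

text \<open>sign with theta_I theta_J = ssign I J theta_(I Un J) for disjoint I, J\<close>
definition ssign :: "nat set \<Rightarrow> nat set \<Rightarrow> int" where
  "ssign I J = (-1) ^ card {(a, b). a \<in> I \<and> b \<in> J \<and> b < a}"

definition smult :: "sup \<Rightarrow> sup \<Rightarrow> sup" where
  "smult F G = (\<lambda>K. \<Sum>I \<in> Pow K. of_int (ssign I (K - I)) * F I * G (K - I))"

definition signed_perm :: "nat \<Rightarrow> (int \<Rightarrow> int) \<Rightarrow> bool" where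
  "signed_perm n \<pi> \<longleftrightarrow>
     bij_betw \<pi> {i. 1 \<le> \<bar>i\<bar> \<and> \<bar>i\<bar> \<le> int n} {i. 1 \<le> \<bar>i\<bar> \<and> \<bar>i\<bar> \<le> int n} \<and>
     (\<forall>i. 1 \<le> \<bar>i\<bar> \<and> \<bar>i\<bar> \<le> int n \<longrightarrow> \<pi> (- i) = - \<pi> i)"

definition xvar :: "int \<Rightarrow> mpoly" where
  "xvar k = (if k > 0 then Var (nat k) else - Var (nat (- k)))"

definition thvar :: "int \<Rightarrow> sup" where
  "thvar k = (if k > 0 then theta {nat k} else sneg (theta {nat (- k)}))"

text \<open>pi(f theta_{j1}...theta_{jk}) = pi(f) theta_{pi j1} ... theta_{pi jk}\<close>
definition act :: "nat \<Rightarrow> (int \<Rightarrow> int) \<Rightarrow> sup \<Rightarrow> sup" where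
  "act n \<pi> F = (\<lambda>K. \<Sum>J \<in> Pow {1..n}.
      smult (emb (subst (\<lambda>i. xvar (\<pi> (int i))) (F J)))
            (foldr smult (map (\<lambda>j. thvar (\<pi> (int j))) (sorted_list_of_set J)) (theta {})) K)"

definition B_invariant :: "nat \<Rightarrow> sup \<Rightarrow> bool" where
  "B_invariant n g \<longleftrightarrow> omega n g \<and> (\<forall>\<pi>. signed_perm n \<pi> \<longrightarrow> act n \<pi> g = g)"

definition const_term :: "sup \<Rightarrow> complex" where
  "const_term g = Poly_Mapping.lookup (g {}) 0"

inductive SI_B :: "nat \<Rightarrow> sup \<Rightarrow> bool" for n where
  zero: "SI_B n szero"
| gen: "\<lbrakk>B_invariant n g; const_term g = 0; omega n a; omega n b; SI_B n F\<rbrakk>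
          \<Longrightarrow> SI_B n (sadd (smult a (smult g b)) F)"

definition dd :: "nat \<Rightarrow> mpoly \<Rightarrow> sup" where
  "dd n f = (\<lambda>K. \<Sum>i\<in>{1..n}. smult (emb (pd i f)) (theta {i}) K)"

definition gale :: "nat set \<Rightarrow> nat set \<Rightarrow> bool" where
  "gale A B \<longleftrightarrow> card A = card B \<and>
     (\<forall>s < card A. sorted_list_of_set A ! s \<le> sorted_list_of_set B ! s)"

definition rr :: "nat \<Rightarrow> nat set \<Rightarrow> nat \<Rightarrow> int" where
  "rr n J i = int n - int (card (J \<union> {i..n})) + 1"

definition qq :: "nat \<Rightarrow> nat set \<Rightarrow> nat \<Rightarrow> sup" where
  "qq n J i = (if i \<notin> J then smult (emb (h2 (rr n J i) (J \<union> {i..n}))) (theta J)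
               else smult (dd n (h2 (rr n J i) (J \<union> {i..n}))) (theta (J - {i})))"

definition pp :: "nat \<Rightarrow> nat set \<Rightarrow> nat \<Rightarrow> mpoly" where
  "pp n J i = (if i \<notin> J then h2 (rr n J i) (J \<union> {i..n})
               else pd i (h2 (rr n J i) (J \<union> {i..n})))"

end

theory Submission imports Defs "HOL-Library.FuncSet" begin

lemma poly_expand: "(p::'a \<Rightarrow>\<^sub>0 'b::comm_monoid_add) = (\<Sum>m\<in>Poly_Mapping.keys p. Poly_Mapping.single m (Poly_Mapping.lookup p m))"
  by (rule poly_mapping_eqI) (simp add: lookup_sum lookup_single when_def in_keys_iff)

lemma lookup_minus_nat: "Poly_Mapping.lookup ((a::'a \<Rightarrow>\<^sub>0 nat) - b) k = Poly_Mapping.lookup a k - Poly_Mapping.lookup b k"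
  by (simp add: minus_poly_mapping.rep_eq)

lemma pd_superset:
  assumes "finite A" "Poly_Mapping.keys p \<subseteq> A"
  shows "pd i p = (\<Sum>m\<in>A. Poly_Mapping.single (m - Poly_Mapping.single i 1)
        (of_nat (Poly_Mapping.lookup m i) * Poly_Mapping.lookup p m))"
  unfolding pd_def using assms by (intro sum.mono_neutral_left) (auto simp: in_keys_iff)

lemma pd_add: "pd i (p + q) = pd i p + pd i q"
proof -
  let ?A = "Poly_Mapping.keys p \<union> Poly_Mapping.keys q"
  have "pd i (p + q) = (\<Sum>m\<in>?A. Poly_Mapping.single (m - Poly_Mapping.single i 1)
        (of_nat (Poly_Mapping.lookup m i) * Poly_Mapping.lookup (p+q) m))"
    by (rule pd_superset) (auto dest: set_mp[OF keys_add])
  also have "\<dots> = pd i p + pd i q"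
    by (subst (1 2) pd_superset[of ?A]) (auto simp: lookup_add distrib_left single_add sum.distrib)
  finally show ?thesis .
qed

lemma pd_zero[simp]: "pd i 0 = 0" by (simp add: pd_def)

lemma pd_uminus: "pd i (- p) = - pd i p"
  by (simp add: pd_def single_uminus sum_negf)

lemma pd_diff: "pd i (p - q) = pd i p - pd i q"
  using pd_add[of i p "-q"] by (simp add: pd_uminus)

lemma pd_sum: "pd i (sum f A) = (\<Sum>x\<in>A. pd i (f x))"
  by (induction A rule: infinite_finite_induct) (auto simp: pd_add)

lemma pd_single: "pd i (Poly_Mapping.single m c) = Poly_Mapping.single (m - Poly_Mapping.single i 1) (of_nat (Poly_Mapping.lookup m i) * c)"
  by (subst pd_superset[of "{m}"]) auto

lemma pd_prod_single: "pd i (Poly_Mapping.single a c * Poly_Mapping.single b d :: mpoly) =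
   pd i (Poly_Mapping.single a c) * Poly_Mapping.single b d + Poly_Mapping.single a c * pd i (Poly_Mapping.single b d)"
proof -
  let ?e = "Poly_Mapping.single i (1::nat)"
  have h1: "Poly_Mapping.single (a - ?e) (of_nat (Poly_Mapping.lookup a i) * c) * Poly_Mapping.single b d
     = Poly_Mapping.single (a + b - ?e) (of_nat (Poly_Mapping.lookup a i) * c * d)"
  proof (cases "Poly_Mapping.lookup a i = 0")
    case True then show ?thesis by simp
  next
    case False
    have "a - ?e + b = a + b - ?e"
      by (rule poly_mapping_eqI) (use False in \<open>auto simp: lookup_minus_nat lookup_add lookup_single when_def\<close>)
    then show ?thesis by (simp add: mult_single)
  qed
  have h2: "Poly_Mapping.single a c * Poly_Mapping.single (b - ?e) (of_nat (Poly_Mapping.lookup b i) * d)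
     = Poly_Mapping.single (a + b - ?e) (of_nat (Poly_Mapping.lookup b i) * c * d)"
  proof (cases "Poly_Mapping.lookup b i = 0")
    case True then show ?thesis by simp
  next
    case False
    have "a + (b - ?e) = a + b - ?e"
      by (rule poly_mapping_eqI) (use False in \<open>auto simp: lookup_minus_nat lookup_add lookup_single when_def\<close>)
    then show ?thesis by (simp add: mult_single mult_ac)
  qed
  show ?thesis
  proof -
    have "pd i (Poly_Mapping.single a c * Poly_Mapping.single b d) = Poly_Mapping.single (a+b-?e) (of_nat (Poly_Mapping.lookup (a+b) i) * (c*d))"
      by (simp only: mult_single pd_single)
    also have "\<dots> = Poly_Mapping.single (a + b - ?e) (of_nat (Poly_Mapping.lookup a i) * c * d) + Poly_Mapping.single (a + b - ?e) (of_nat (Poly_Mapping.lookup b i) * c * d)"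
      by (simp add: lookup_add algebra_simps flip: single_add)
    also have "\<dots> = pd i (Poly_Mapping.single a c) * Poly_Mapping.single b d + Poly_Mapping.single a c * pd i (Poly_Mapping.single b d)"
      by (simp only: pd_single h1 h2)
    finally show ?thesis .
  qed
qed

lemma pd_mult: "pd i (p * q :: mpoly) = pd i p * q + p * pd i q"
proof -
  let ?s = "\<lambda>p m. Poly_Mapping.single m (Poly_Mapping.lookup p m)"
  have "p * q = (\<Sum>a\<in>Poly_Mapping.keys p. \<Sum>b\<in>Poly_Mapping.keys q. ?s p a * ?s q b)"
    by (subst (1 2) poly_expand) (simp add: sum_product)
  then have "pd i (p * q) = (\<Sum>a\<in>Poly_Mapping.keys p. \<Sum>b\<in>Poly_Mapping.keys q.
       pd i (?s p a) * ?s q b + ?s p a * pd i (?s q b))"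
    by (simp add: pd_sum pd_prod_single)
  also have "\<dots> = (\<Sum>a\<in>Poly_Mapping.keys p. pd i (?s p a)) * (\<Sum>b\<in>Poly_Mapping.keys q. ?s q b)
      + (\<Sum>a\<in>Poly_Mapping.keys p. ?s p a) * (\<Sum>b\<in>Poly_Mapping.keys q. pd i (?s q b))"
    by (simp add: sum.distrib sum_product)
  also have "\<dots> = pd i p * q + p * pd i q"
    by (simp add: flip: pd_sum poly_expand)
  finally show ?thesis .
qed

lemma Const_mult: "Const (a * b) = Const a * Const b"
  by (simp add: Const_def mult_single)
lemma Const_add: "Const (a + b) = Const a + Const b"
  by (simp add: Const_def single_add)
lemma Const_one[simp]: "Const 1 = 1" by (simp add: Const_def)
lemma Const_zero[simp]: "Const 0 = 0" by (simp add: Const_def)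
lemma Const_uminus: "Const (- a) = - Const a" by (simp add: Const_def single_uminus)

lemma prod_pow_superset:
  assumes "finite A" "Poly_Mapping.keys m \<subseteq> A"
  shows "(\<Prod>i\<in>Poly_Mapping.keys m. (s i :: mpoly) ^ Poly_Mapping.lookup m i) = (\<Prod>i\<in>A. s i ^ Poly_Mapping.lookup m i)"
  using assms by (intro prod.mono_neutral_left) (auto simp: in_keys_iff)

lemma subst_superset:
  assumes "finite A" "Poly_Mapping.keys p \<subseteq> A"
  shows "subst s p = (\<Sum>m\<in>A. Const (Poly_Mapping.lookup p m) *
      (\<Prod>i \<in> Poly_Mapping.keys m. s i ^ Poly_Mapping.lookup m i))"
  unfolding subst_def using assms by (intro sum.mono_neutral_left) (auto simp: in_keys_iff)

lemma subst_add: "subst s (p + q) = subst s p + subst s q"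
proof -
  let ?A = "Poly_Mapping.keys p \<union> Poly_Mapping.keys q"
  have "subst s (p + q) = (\<Sum>m\<in>?A. Const (Poly_Mapping.lookup (p+q) m) *
      (\<Prod>i \<in> Poly_Mapping.keys m. s i ^ Poly_Mapping.lookup m i))"
    by (rule subst_superset) (auto dest: set_mp[OF keys_add])
  also have "\<dots> = subst s p + subst s q"
    by (subst (1 2) subst_superset[of ?A]) (auto simp: lookup_add distrib_right Const_add sum.distrib)
  finally show ?thesis .
qed

lemma subst_zero[simp]: "subst s 0 = 0" by (simp add: subst_def)

lemma subst_uminus: "subst s (- p) = - subst s p"
  by (simp add: subst_def Const_uminus sum_negf)

lemma subst_diff: "subst s (p - q) = subst s p - subst s q"
  using subst_add[of s p "-q"] by (simp add: subst_uminus)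

lemma subst_sum: "subst s (sum f A) = (\<Sum>x\<in>A. subst s (f x))"
  by (induction A rule: infinite_finite_induct) (auto simp: subst_add)

lemma subst_single: "subst s (Poly_Mapping.single m c) = Const c * (\<Prod>i \<in> Poly_Mapping.keys m. s i ^ Poly_Mapping.lookup m i)"
  by (subst subst_superset[of "{m}"]) auto

lemma subst_prod_single: "subst s (Poly_Mapping.single a c * Poly_Mapping.single b d) =
   subst s (Poly_Mapping.single a c) * subst s (Poly_Mapping.single b d)"
proof -
  let ?A = "Poly_Mapping.keys a \<union> Poly_Mapping.keys b"
  have k: "Poly_Mapping.keys (a + b) \<subseteq> ?A" by (rule keys_add)
  have "subst s (Poly_Mapping.single a c * Poly_Mapping.single b d) =
     Const (c * d) * (\<Prod>i \<in> ?A. s i ^ Poly_Mapping.lookup (a + b) i)"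
    by (simp only: mult_single subst_single prod_pow_superset[OF _ k] finite_UnI finite_keys)
  also have "\<dots> = (Const c * (\<Prod>i \<in> ?A. s i ^ Poly_Mapping.lookup a i)) * (Const d * (\<Prod>i \<in> ?A. s i ^ Poly_Mapping.lookup b i))"
    by (simp add: Const_mult lookup_add power_add prod.distrib mult_ac)
  also have "\<dots> = subst s (Poly_Mapping.single a c) * subst s (Poly_Mapping.single b d)"
    by (simp only: subst_single prod_pow_superset[of ?A] finite_UnI finite_keys Un_upper1 Un_upper2)
  finally show ?thesis .
qed

lemma subst_mult: "subst s (p * q :: mpoly) = subst s p * subst s q"
proof -
  let ?s = "\<lambda>p m. Poly_Mapping.single m (Poly_Mapping.lookup p m)"
  have "p * q = (\<Sum>a\<in>Poly_Mapping.keys p. \<Sum>b\<in>Poly_Mapping.keys q. ?s p a * ?s q b)"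
    by (subst (1 2) poly_expand) (simp add: sum_product)
  then have "subst s (p * q) = (\<Sum>a\<in>Poly_Mapping.keys p. \<Sum>b\<in>Poly_Mapping.keys q.
       subst s (?s p a) * subst s (?s q b))"
    by (simp add: subst_sum subst_prod_single)
  also have "\<dots> = (\<Sum>a\<in>Poly_Mapping.keys p. subst s (?s p a)) * (\<Sum>b\<in>Poly_Mapping.keys q. subst s (?s q b))"
    by (simp add: sum_product)
  also have "\<dots> = subst s p * subst s q"
    by (simp add: flip: subst_sum poly_expand)
  finally show ?thesis .
qed

lemma subst_one[simp]: "subst s 1 = 1"
  using subst_single[of s 0 1] by simp

lemma subst_Const[simp]: "subst s (Const c) = Const c"
  using subst_single[of s 0 c] by (simp add: Const_def)

lemma subst_Var[simp]: "subst s (Var i) = s i"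
  unfolding Var_def by (simp add: subst_single)

lemma subst_power: "subst s (p ^ k) = subst s p ^ k"
  by (induction k) (auto simp: subst_mult)

lemma subst_prod: "subst s (prod f A) = (\<Prod>x\<in>A. subst s (f x))"
  by (induction A rule: infinite_finite_induct) (auto simp: subst_mult)

lemma pd_Const[simp]: "pd i (Const c) = 0"
  unfolding Const_def by (simp add: pd_single)

lemma pd_one[simp]: "pd i 1 = 0"
  using pd_Const[of i 1] by simp

lemma pd_Var: "pd i (Var j) = (if i = j then 1 else 0)"
  unfolding Var_def by (simp add: pd_single lookup_single when_def)

lemma pd_power: "pd i (p ^ Suc k) = of_nat (Suc k) * p ^ k * pd i p"
  by (induction k) (auto simp: pd_mult algebra_simps)


definition inpr :: "nat set \<Rightarrow> mpoly \<Rightarrow> bool" where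
  "inpr V p \<longleftrightarrow> (\<forall>m \<in> Poly_Mapping.keys p. Poly_Mapping.keys m \<subseteq> V)"

lemma in_polyring_inpr: "in_polyring n p = inpr {1..n} p"
  by (simp add: in_polyring_def inpr_def)

lemma inpr_add: "inpr V p \<Longrightarrow> inpr V q \<Longrightarrow> inpr V (p + q)"
  unfolding inpr_def using keys_add[of p q] by blast

lemma inpr_uminus: "inpr V p \<Longrightarrow> inpr V (- p)"
  unfolding inpr_def by simp

lemma inpr_diff: "inpr V p \<Longrightarrow> inpr V q \<Longrightarrow> inpr V (p - q)"
  using inpr_add[of V p "-q"] inpr_uminus[of V q] by simp

lemma inpr_zero[simp]: "inpr V 0" by (simp add: inpr_def)
lemma inpr_one[simp]: "inpr V 1" by (simp add: inpr_def)
lemma inpr_Const[simp]: "inpr V (Const c)" by (simp add: inpr_def Const_def)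
lemma inpr_Var: "i \<in> V \<Longrightarrow> inpr V (Var i)" by (simp add: inpr_def Var_def)

lemma inpr_mult: "inpr V p \<Longrightarrow> inpr V q \<Longrightarrow> inpr V (p * q)"
  unfolding inpr_def
proof
  fix m assume p: "\<forall>m\<in>Poly_Mapping.keys p. Poly_Mapping.keys m \<subseteq> V"
    and q: "\<forall>m\<in>Poly_Mapping.keys q. Poly_Mapping.keys m \<subseteq> V" and m: "m \<in> Poly_Mapping.keys (p * q)"
  then obtain a b where "m = a + b" "a \<in> Poly_Mapping.keys p" "b \<in> Poly_Mapping.keys q"
    using keys_mult[of p q] by blast
  then show "Poly_Mapping.keys m \<subseteq> V" using p q keys_add[of a b] by blast
qed

lemma inpr_sum: "(\<And>x. x \<in> A \<Longrightarrow> inpr V (f x)) \<Longrightarrow> inpr V (sum f A)"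
  by (induction A rule: infinite_finite_induct) (auto intro: inpr_add)

lemma inpr_prod: "(\<And>x. x \<in> A \<Longrightarrow> inpr V (f x)) \<Longrightarrow> inpr V (prod f A)"
  by (induction A rule: infinite_finite_induct) (auto intro: inpr_mult)

lemma inpr_power: "inpr V p \<Longrightarrow> inpr V (p ^ k)"
  by (induction k) (auto intro: inpr_mult)

lemma inpr_pd: "inpr V p \<Longrightarrow> inpr V (pd i p)"
  unfolding pd_def
proof (rule inpr_sum)
  fix m assume p: "inpr V p" and m: "m \<in> Poly_Mapping.keys p"
  have "Poly_Mapping.keys (m - Poly_Mapping.single i 1) \<subseteq> Poly_Mapping.keys m"
    by (auto simp: in_keys_iff lookup_minus_nat)
  then show "inpr V (Poly_Mapping.single (m - Poly_Mapping.single i 1)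
             (of_nat (Poly_Mapping.lookup m i) * Poly_Mapping.lookup p m))"
    using p m by (auto simp: inpr_def)
qed

lemma pd_notin: "inpr V p \<Longrightarrow> l \<notin> V \<Longrightarrow> pd l p = 0"
  unfolding pd_def inpr_def
proof (intro sum.neutral ballI)
  fix x assume "\<forall>m\<in>Poly_Mapping.keys p. Poly_Mapping.keys m \<subseteq> V" "l \<notin> V" "x \<in> Poly_Mapping.keys p"
  then have "Poly_Mapping.lookup x l = 0" by (metis not_in_keys_iff_lookup_eq_zero subsetD)
  then show "Poly_Mapping.single (x - Poly_Mapping.single l 1) (of_nat (Poly_Mapping.lookup x l) * Poly_Mapping.lookup p x) = 0"
    by simp
qed

lemma subst0: "subst (\<lambda>_. 0) p = Const (Poly_Mapping.lookup p 0)"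
proof -
  have "subst (\<lambda>_. 0) p = (\<Sum>m\<in>Poly_Mapping.keys p. if m = 0 then Const (Poly_Mapping.lookup p 0) else 0)"
    unfolding subst_def
  proof (intro sum.cong refl)
    fix m assume "m \<in> Poly_Mapping.keys p"
    show "Const (Poly_Mapping.lookup p m) * (\<Prod>i\<in>Poly_Mapping.keys m. 0 ^ Poly_Mapping.lookup m i) =
      (if m = 0 then Const (Poly_Mapping.lookup p 0) else 0)"
    proof (cases "m = 0")
      case False
      then obtain i where "i \<in> Poly_Mapping.keys m" by (metis keys_eq_empty ex_in_conv)
      then have "(\<Prod>i\<in>Poly_Mapping.keys m. (0::mpoly) ^ Poly_Mapping.lookup m i) = 0"
        by (intro prod_zero) (auto simp: in_keys_iff)
      then show ?thesis using False by simp
    qed simp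
  qed
  also have "\<dots> = Const (Poly_Mapping.lookup p 0)"
    by (auto simp: in_keys_iff)
  finally show ?thesis .
qed

lemma Const_eq_0: "Const c = 0 \<longleftrightarrow> c = 0"
  by (metis Const_def lookup_single_eq single_zero)

definition Mset :: "nat set \<Rightarrow> nat \<Rightarrow> (nat \<Rightarrow>\<^sub>0 nat) set" where
  "Mset S k = {m. Poly_Mapping.keys m \<subseteq> S \<and> (\<Sum>s\<in>S. Poly_Mapping.lookup m s) = k}"

definition Pm :: "nat set \<Rightarrow> (nat \<Rightarrow>\<^sub>0 nat) \<Rightarrow> mpoly" where
  "Pm S m = (\<Prod>s\<in>S. Var s ^ (2 * Poly_Mapping.lookup m s))"

lemma h2_nat: "h2 (int j) S = (\<Sum>m\<in>Mset S j. Pm S m)"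
  by (simp add: h2_def Mset_def Pm_def)

lemma finite_Mset: assumes "finite S" shows "finite (Mset S k)"
proof -
  let ?f = "\<lambda>g. Abs_poly_mapping (\<lambda>s. if s \<in> S then g s else 0)"
  have "Mset S k \<subseteq> ?f ` (PiE S (\<lambda>_. {0..k}))"
  proof
    fix m assume m: "m \<in> Mset S k"
    have "(\<lambda>s. if s \<in> S then restrict (Poly_Mapping.lookup m) S s else 0) = Poly_Mapping.lookup m"
      using m by (auto simp: Mset_def in_keys_iff fun_eq_iff FuncSet.restrict_def)
    then have "m = ?f (restrict (Poly_Mapping.lookup m) S)"
      by simp
    moreover have "restrict (Poly_Mapping.lookup m) S \<in> PiE S (\<lambda>_. {0..k})"
    proof -
      have "\<And>s. s \<in> S \<Longrightarrow> Poly_Mapping.lookup m s \<le> k"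
        using m assms unfolding Mset_def by (auto intro: member_le_sum[of _ S "Poly_Mapping.lookup m", simplified])
      then show ?thesis by auto
    qed
    ultimately show "m \<in> ?f ` (PiE S (\<lambda>_. {0..k}))" by blast
  qed
  moreover have "finite (PiE S (\<lambda>_. {0..k::nat}))" using assms by (intro finite_PiE) auto
  ultimately show ?thesis by (meson finite_imageI finite_subset)
qed

lemma h2_empty: "h2 (int j) {} = (if j = 0 then 1 else 0)"
proof -
  have "Mset {} j = (if j = 0 then {0} else {})"
    by (auto simp: Mset_def)
  then show ?thesis by (simp add: h2_nat Pm_def)
qed

lemma h2_insert:
  assumes "finite S" "t \<notin> S"
  shows "h2 (int j) (insert t S) = (\<Sum>k\<le>j. Var t ^ (2 * k) * h2 (int (j - k)) S)"
proof -
  let ?T = "SIGMA k:{..j}. Mset S (j - k)"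
  have "(\<Sum>k\<le>j. Var t ^ (2 * k) * h2 (int (j - k)) S) = (\<Sum>k\<le>j. \<Sum>m\<in>Mset S (j-k). Var t ^ (2 * k) * Pm S m)"
    by (simp only: h2_nat sum_distrib_left)
  also have "\<dots> = (\<Sum>(k,m)\<in>?T. Var t ^ (2 * k) * Pm S m)"
    by (rule sum.Sigma) (auto intro: finite_Mset assms)
  also have "\<dots> = (\<Sum>m\<in>Mset (insert t S) j. Pm (insert t S) m)"
  proof (rule sum.reindex_bij_witness[where i = "\<lambda>m. (Poly_Mapping.lookup m t, m - Poly_Mapping.single t (Poly_Mapping.lookup m t))"
        and j = "\<lambda>(k,m). m + Poly_Mapping.single t k"])
    fix a assume a: "a \<in> ?T"
    obtain k m where km: "a = (k, m)" "k \<le> j" "m \<in> Mset S (j - k)" using a by auto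
    have mt: "Poly_Mapping.lookup m t = 0" using km assms by (auto simp: Mset_def in_keys_iff)
    have eq: "m + Poly_Mapping.single t k - Poly_Mapping.single t k = m"
      by (rule poly_mapping_eqI) (simp add: lookup_minus_nat lookup_add)
    show "(\<lambda>m. (Poly_Mapping.lookup m t, m - Poly_Mapping.single t (Poly_Mapping.lookup m t))) ((\<lambda>(k,m). m + Poly_Mapping.single t k) a) = a"
      using km mt eq by (simp add: lookup_add)
    have s1: "(\<Sum>s\<in>S. Poly_Mapping.lookup (m + Poly_Mapping.single t k) s) = (\<Sum>s\<in>S. Poly_Mapping.lookup m s)"
      using assms by (intro sum.cong) (auto simp: lookup_add lookup_single when_def)
    show "(\<lambda>(k,m). m + Poly_Mapping.single t k) a \<in> Mset (insert t S) j"
      using km mt assms s1 keys_add[of m "Poly_Mapping.single t k"]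
      by (auto simp: Mset_def lookup_add split: if_splits)
    have "(\<Prod>s\<in>S. Var s ^ (2 * Poly_Mapping.lookup (m + Poly_Mapping.single t k) s)) = Pm S m"
      unfolding Pm_def using assms by (intro prod.cong refl) (auto simp: lookup_add lookup_single when_def)
    then have "Pm (insert t S) (m + Poly_Mapping.single t k) = Var t ^ (2 * k) * Pm S m"
      using assms mt by (simp add: Pm_def lookup_add)
    then show "Pm (insert t S) ((\<lambda>(k,m). m + Poly_Mapping.single t k) a) = (case a of (k, m) \<Rightarrow> Var t ^ (2 * k) * Pm S m)"
      using km by simp
  next
    fix b assume b: "b \<in> Mset (insert t S) j"
    let ?k = "Poly_Mapping.lookup b t" and ?m = "b - Poly_Mapping.single t (Poly_Mapping.lookup b t)"
    show "(\<lambda>(k,m). m + Poly_Mapping.single t k) (?k, ?m) = b"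
      by simp (rule poly_mapping_eqI, simp add: lookup_add lookup_minus_nat lookup_single when_def)
    have sb: "(\<Sum>s\<in>insert t S. Poly_Mapping.lookup b s) = ?k + (\<Sum>s\<in>S. Poly_Mapping.lookup b s)"
      using assms by simp
    have s2: "(\<Sum>s\<in>S. Poly_Mapping.lookup ?m s) = (\<Sum>s\<in>S. Poly_Mapping.lookup b s)"
      using assms by (intro sum.cong) (auto simp: lookup_minus_nat lookup_single when_def)
    have "Poly_Mapping.keys ?m \<subseteq> S"
    proof
      fix x assume x: "x \<in> Poly_Mapping.keys ?m"
      then have "x \<noteq> t" by (auto simp: in_keys_iff lookup_minus_nat)
      moreover have "x \<in> Poly_Mapping.keys b" using x by (auto simp: in_keys_iff lookup_minus_nat)
      ultimately show "x \<in> S" using b by (auto simp: Mset_def)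
    qed
    then show "(Poly_Mapping.lookup b t, b - Poly_Mapping.single t (Poly_Mapping.lookup b t)) \<in> ?T"
      using b sb s2 by (auto simp: Mset_def)
  qed
  also have "\<dots> = h2 (int j) (insert t S)" by (simp add: h2_nat)
  finally show ?thesis by simp
qed

lemma h2_step:
  assumes "finite S" "t \<notin> S" "j \<ge> 1"
  shows "h2 (int j) S = h2 (int j) (insert t S) - Var t ^ 2 * h2 (int (j - 1)) (insert t S)"
proof -
  obtain j' where j: "j = Suc j'" using assms by (cases j) auto
  have "h2 (int j) (insert t S) = h2 (int j) S + (\<Sum>k\<le>j'. Var t ^ (2 * Suc k) * h2 (int (j - Suc k)) S)"
    unfolding h2_insert[OF assms(1,2)] j sum.atMost_Suc_shift by simp
  also have "(\<Sum>k\<le>j'. Var t ^ (2 * Suc k) * h2 (int (j - Suc k)) S) = Var t ^ 2 * h2 (int (j - 1)) (insert t S)"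
    unfolding h2_insert[OF assms(1,2)] j sum_distrib_left
  proof (rule sum.cong)
    show "{..j'} = {..Suc j' - 1}" by simp
  next
    fix x
    have p: "Var t ^ (2 * Suc x) = Var t ^ 2 * Var t ^ (2 * x)" by (simp flip: power_add)
    have q: "Suc j' - Suc x = Suc j' - 1 - x" by simp
    show "Var t ^ (2 * Suc x) * h2 (int (Suc j' - Suc x)) S = Var t ^ 2 * (Var t ^ (2 * x) * h2 (int (Suc j' - 1 - x)) S)"
      by (simp only: p q mult.assoc)
  qed
  finally show ?thesis by simp
qed

lemma h2_inpr: "S \<subseteq> V \<Longrightarrow> inpr V (h2 (int j) S)"
  unfolding h2_nat Pm_def
  by (intro inpr_sum inpr_prod inpr_power inpr_Var) auto

lemma h2_subst0: "finite S \<Longrightarrow> j \<ge> 1 \<Longrightarrow> subst (\<lambda>_. 0) (h2 (int j) S) = 0"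
proof (induction S arbitrary: j rule: finite_induct)
  case empty then show ?case by (simp add: h2_empty)
next
  case (insert t S)
  show ?case unfolding h2_insert[OF insert(1,2)] subst_sum
  proof (intro sum.neutral ballI)
    fix k assume "k \<in> {..j}"
    show "subst (\<lambda>_. 0) (Var t ^ (2 * k) * h2 (int (j - k)) S) = 0"
      using insert by (cases "k = 0") (auto simp: subst_mult subst_power)
  qed
qed

lemma h2_const: "finite S \<Longrightarrow> j \<ge> 1 \<Longrightarrow> Poly_Mapping.lookup (h2 (int j) S) 0 = 0"
  using h2_subst0[of S j] by (simp add: subst0 Const_eq_0)

lemma h2_subst:
  assumes "finite S" "inj_on \<tau> S" "\<And>t. t \<in> S \<Longrightarrow> \<sigma> t ^ 2 = Var (\<tau> t) ^ 2"
  shows "subst \<sigma> (h2 (int j) S) = h2 (int j) (\<tau> ` S)"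
  using assms
proof (induction S arbitrary: j rule: finite_induct)
  case empty then show ?case by (simp add: h2_empty)
next
  case (insert t S)
  have nt: "\<tau> t \<notin> \<tau> ` S" using insert by auto
  have "subst \<sigma> (h2 (int j) (insert t S)) = (\<Sum>k\<le>j. Var (\<tau> t) ^ (2 * k) * h2 (int (j - k)) (\<tau> ` S))"
    unfolding h2_insert[OF insert(1,2)] subst_sum
  proof (intro sum.cong refl)
    fix k
    have "\<sigma> t ^ (2 * k) = Var (\<tau> t) ^ (2 * k)"
      using insert(5)[of t] by (simp add: power_mult)
    then show "subst \<sigma> (Var t ^ (2 * k) * h2 (int (j - k)) S) = Var (\<tau> t) ^ (2 * k) * h2 (int (j - k)) (\<tau> ` S)"
      using insert by (simp add: subst_mult subst_power)
  qed
  also have "\<dots> = h2 (int j) (\<tau> ` insert t S)"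
    using h2_insert[of "\<tau> ` S" "\<tau> t" j] insert(1) nt by simp
  finally show ?case .
qed

definition CR :: "(nat \<Rightarrow> mpoly) \<Rightarrow> (nat \<Rightarrow> nat) \<Rightarrow> mpoly \<Rightarrow> nat \<Rightarrow> mpoly \<Rightarrow> bool" where
  "CR \<sigma> \<tau> e l f \<longleftrightarrow> pd (\<tau> l) (subst \<sigma> f) = e * subst \<sigma> (pd l f)"

lemma CR_add: "CR \<sigma> \<tau> e l f \<Longrightarrow> CR \<sigma> \<tau> e l g \<Longrightarrow> CR \<sigma> \<tau> e l (f + g)"
  by (simp add: CR_def pd_add subst_add distrib_left)

lemma CR_mult: "CR \<sigma> \<tau> e l f \<Longrightarrow> CR \<sigma> \<tau> e l g \<Longrightarrow> CR \<sigma> \<tau> e l (f * g)"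
  by (simp add: CR_def pd_mult subst_mult subst_add algebra_simps)

lemma CR_one: "CR \<sigma> \<tau> e l 1"
  by (simp add: CR_def)

lemma CR_sum: "(\<And>x. x \<in> A \<Longrightarrow> CR \<sigma> \<tau> e l (f x)) \<Longrightarrow> CR \<sigma> \<tau> e l (sum f A)"
  by (induction A rule: infinite_finite_induct) (simp_all add: CR_def pd_add subst_add distrib_left)

lemma CR_prod: "(\<And>x. x \<in> A \<Longrightarrow> CR \<sigma> \<tau> e l (f x)) \<Longrightarrow> CR \<sigma> \<tau> e l (prod f A)"
  by (induction A rule: infinite_finite_induct) (auto intro: CR_mult CR_one)

lemma CR_power: "CR \<sigma> \<tau> e l f \<Longrightarrow> CR \<sigma> \<tau> e l (f ^ k)"
  by (induction k) (auto intro: CR_mult CR_one)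

lemma pd_pm1: "c = 1 \<or> c = -1 \<Longrightarrow> pd i c = 0"
  using pd_uminus[of i 1] by auto

lemma CR_Var:
  assumes "i \<in> V" "l \<in> V" "inj_on \<tau> V" "\<sigma> i = e' i * Var (\<tau> i)" "e' i = 1 \<or> e' i = -1" "e' l = e"
  shows "CR \<sigma> \<tau> e l (Var i)"
proof -
  have "pd (\<tau> l) (\<sigma> i) = e' i * (if \<tau> l = \<tau> i then 1 else 0)"
    using assms(4,5) by (simp add: pd_mult pd_pm1 pd_Var)
  also have "\<dots> = e * subst \<sigma> (pd l (Var i))"
    using assms inj_onD[OF assms(3), of l i] by (auto simp: pd_Var)
  finally show ?thesis by (simp add: CR_def)
qed

lemma CR_h2:
  assumes "S \<subseteq> V" "l \<in> V" "inj_on \<tau> V" "\<And>i. i \<in> V \<Longrightarrow> \<sigma> i = e' i * Var (\<tau> i)"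
     "\<And>i. i \<in> V \<Longrightarrow> e' i = 1 \<or> e' i = -1"
  shows "CR \<sigma> \<tau> (e' l) l (h2 (int j) S)"
  unfolding h2_nat Pm_def
  by (intro CR_sum CR_prod CR_power CR_Var[where V=V and e'=e']) (use assms in auto)

section \<open>Superspace\<close>

definition mon :: "nat set \<Rightarrow> mpoly \<Rightarrow> sup" where
  "mon L y = (\<lambda>K. if K = L then y else 0)"

lemma theta_mono: "theta L = mon L 1" by (simp add: theta_def mon_def)

lemma smult_inf: "infinite K \<Longrightarrow> smult F G K = 0"
  by (simp add: smult_def)

lemma ssign_empty1[simp]: "ssign {} K = 1" by (simp add: ssign_def)
lemma ssign_empty2[simp]: "ssign K {} = 1" by (simp add: ssign_def)

lemma smult_emb: "finite K \<Longrightarrow> smult (emb a) X K = a * X K"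
proof -
  assume K: "finite K"
  have "smult (emb a) X K = (\<Sum>I\<in>Pow K. if I = {} then a * X K else 0)"
    unfolding smult_def emb_def by (intro sum.cong refl) auto
  also have "\<dots> = a * X K" using K by (simp add: sum.delta')
  finally show ?thesis .
qed

lemma smult_theta0: "finite K \<Longrightarrow> smult X (theta {}) K = X K"
proof -
  assume K: "finite K"
  have "smult X (theta {}) K = (\<Sum>I\<in>Pow K. if I = K then X K else 0)"
    unfolding smult_def theta_def by (intro sum.cong refl) auto
  also have "\<dots> = X K" using K by (simp add: sum.delta')
  finally show ?thesis .
qed

lemma smult_emb_mono: "finite L \<Longrightarrow> smult (emb f) (mon L y) = mon L (f * y)"
proof
  fix K assume L: "finite L"
  show "smult (emb f) (mon L y) K = mon L (f * y) K"
    by (cases "finite K") (use L in \<open>auto simp: smult_emb smult_inf mon_def\<close>)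
qed

lemma dd_apply: "dd n f K = (\<Sum>l\<in>{1..n}. if K = {l} then pd l f else 0)"
  unfolding dd_def
proof (intro sum.cong refl)
  fix l show "smult (emb (pd l f)) (theta {l}) K = (if K = {l} then pd l f else 0)"
    by (cases "finite K") (auto simp: smult_emb smult_inf theta_def)
qed

lemma smult_dd_mono:
  assumes L: "finite L"
  shows "smult (dd n c) (mon L y) K =
    (\<Sum>l\<in>{1..n}. if l \<in> K \<and> K - {l} = L then of_int (ssign {l} L) * pd l c * y else 0)"
proof (cases "finite K")
  case False
  have nl: "\<And>l. (l \<in> K \<and> K - {l} = L) = False"
    using False L by (metis finite_insert insert_Diff)
  show ?thesis using False by (simp add: smult_inf nl)
next
  case K: True
  have "smult (dd n c) (mon L y) K = (\<Sum>I\<in>Pow K. \<Sum>l\<in>{1..n}.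
      if I = {l} then of_int (ssign {l} (K - {l})) * pd l c * mon L y (K - {l}) else 0)"
    unfolding smult_def dd_apply
  proof (intro sum.cong refl)
    fix I
    have "of_int (ssign I (K - I)) * (\<Sum>l\<in>{1..n}. if I = {l} then pd l c else 0) * mon L y (K - I)
       = (\<Sum>l\<in>{1..n}. of_int (ssign I (K - I)) * (if I = {l} then pd l c else 0) * mon L y (K - I))"
      by (simp only: sum_distrib_left sum_distrib_right)
    also have "\<dots> = (\<Sum>l\<in>{1..n}. if I = {l} then of_int (ssign {l} (K - {l})) * pd l c * mon L y (K - {l}) else 0)"
      by (intro sum.cong refl) simp
    finally show "of_int (ssign I (K - I)) * (\<Sum>l\<in>{1..n}. if I = {l} then pd l c else 0) * mon L y (K - I)
       = (\<Sum>l\<in>{1..n}. if I = {l} then of_int (ssign {l} (K - {l})) * pd l c * mon L y (K - {l}) else 0)" .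
  qed
  also have "\<dots> = (\<Sum>l\<in>{1..n}. \<Sum>I\<in>Pow K.
      if I = {l} then of_int (ssign {l} (K - {l})) * pd l c * mon L y (K - {l}) else 0)"
    by (rule sum.swap)
  also have "\<dots> = (\<Sum>l\<in>{1..n}. if l \<in> K \<and> K - {l} = L then of_int (ssign {l} L) * pd l c * y else 0)"
    using K by (intro sum.cong refl) (auto simp: sum.delta' mon_def)
  finally show ?thesis .
qed

lemma SI_B_sadd: "SI_B n F \<Longrightarrow> SI_B n G \<Longrightarrow> SI_B n (sadd F G)"
proof (induction F rule: SI_B.induct)
  case zero
  then show ?case by (simp add: sadd_def szero_def)
next
  case (gen g a b F)
  have "sadd (sadd (smult a (smult g b)) F) G = sadd (smult a (smult g b)) (sadd F G)"
    by (simp add: sadd_def add.assoc)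
  then show ?case using gen by (auto intro: SI_B.gen)
qed

lemma omega_emb: "in_polyring n c \<Longrightarrow> omega n (emb c)"
  by (auto simp: omega_def emb_def in_polyring_inpr)

lemma omega_theta: "L \<subseteq> {1..n} \<Longrightarrow> omega n (theta L)"
  by (auto simp: omega_def theta_def in_polyring_inpr)

lemma omega_dd: "in_polyring n c \<Longrightarrow> omega n (dd n c)"
  unfolding omega_def dd_apply in_polyring_inpr
proof (intro conjI allI impI)
  fix K
  assume nz: "(\<Sum>l\<in>{1..n}. if K = {l} then pd l c else 0) \<noteq> 0"
  have "\<exists>l\<in>{1..n}. (if K = {l} then pd l c else 0) \<noteq> 0"
  proof (rule ccontr)
    assume "\<not> ?thesis"
    then have "(\<Sum>l\<in>{1..n}. if K = {l} then pd l c else 0) = 0" by (intro sum.neutral) blast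
    then show False using nz by simp
  qed
  then obtain l where "l \<in> {1..n}" "(if K = {l} then pd l c else 0) \<noteq> 0" by blast
  then have "l \<in> {1..n}" "K = {l}" by (auto split: if_splits)
  then show "K \<subseteq> {1..n}" by simp
next
  fix K assume "inpr {1..n} c"
  then show "inpr {1..n} (\<Sum>l\<in>{1..n}. if K = {l} then pd l c else 0)"
    by (intro inpr_sum) (auto intro: inpr_pd)
qed

definition Good :: "nat \<Rightarrow> mpoly \<Rightarrow> bool" where
  "Good n f \<longleftrightarrow> (\<forall>c L. in_polyring n c \<longrightarrow> L \<subseteq> {1..n} \<longrightarrow>
     SI_B n (smult (emb (c * f)) (theta L)) \<and> SI_B n (smult (dd n (c * f)) (theta L)))"

lemma emb_theta: "finite L \<Longrightarrow> smult (emb f) (theta L) = mon L f"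
  by (simp add: theta_mono smult_emb_mono)

lemma sadd_szero: "sadd X szero = X" by (simp add: sadd_def szero_def)

lemma dd_theta: "finite L \<Longrightarrow> smult (dd n f) (theta L) K =
    (\<Sum>l\<in>{1..n}. if l \<in> K \<and> K - {l} = L then of_int (ssign {l} L) * pd l f else 0)"
  unfolding theta_mono smult_dd_mono by (intro sum.cong refl) auto

lemma Good_from_gen:
  assumes "B_invariant n (emb f)" "const_term (emb f) = 0" "B_invariant n (dd n f)" "const_term (dd n f) = 0"
    "in_polyring n f"
  shows "Good n f"
  unfolding Good_def
proof (intro allI impI conjI)
  fix c L assume c: "in_polyring n c" and L: "L \<subseteq> {1..n}"
  have fL: "finite L" using L finite_subset by blast
  have e1: "smult (emb (c * f)) (theta L) = sadd (smult (emb c) (smult (emb f) (theta L))) szero"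
    using fL by (simp add: emb_theta smult_emb_mono sadd_szero)
  show "SI_B n (smult (emb (c * f)) (theta L))"
    unfolding e1 by (rule SI_B.gen) (use assms c omega_theta[OF L] in \<open>auto intro: omega_emb SI_B.zero\<close>)
  have e2: "smult (dd n (c * f)) (theta L) = sadd (smult (dd n c) (smult (emb f) (theta L)))
      (sadd (smult (emb c) (smult (dd n f) (theta L))) szero)"
  proof
    fix K
    show "smult (dd n (c * f)) (theta L) K = sadd (smult (dd n c) (smult (emb f) (theta L)))
      (sadd (smult (emb c) (smult (dd n f) (theta L))) szero) K"
    proof (cases "finite K")
      case False then show ?thesis by (simp add: smult_inf sadd_def szero_def)
    next
      case True
      then show ?thesis using fL
        by (simp add: sadd_def szero_def emb_theta smult_dd_mono smult_emb dd_theta pd_mult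
            sum_distrib_left flip: sum.distrib) (intro sum.cong refl, simp add: algebra_simps pd_mult)
    qed
  qed
  show "SI_B n (smult (dd n (c * f)) (theta L))"
    unfolding e2
    by (intro SI_B.gen SI_B.zero) (use assms c omega_theta[OF L] in \<open>auto intro: omega_emb omega_dd\<close>)
qed

lemma mon_add: "mon L (a + b) = sadd (mon L a) (mon L b)"
  by (auto simp: mon_def sadd_def)

lemma Good_add: "Good n f \<Longrightarrow> Good n g \<Longrightarrow> Good n (f + g)"
  unfolding Good_def
proof (intro allI impI conjI)
  fix c L assume f: "\<forall>c L. in_polyring n c \<longrightarrow> L \<subseteq> {1..n} \<longrightarrow>
     SI_B n (smult (emb (c * f)) (theta L)) \<and> SI_B n (smult (dd n (c * f)) (theta L))"
    and g: "\<forall>c L. in_polyring n c \<longrightarrow> L \<subseteq> {1..n} \<longrightarrow>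
     SI_B n (smult (emb (c * g)) (theta L)) \<and> SI_B n (smult (dd n (c * g)) (theta L))"
    and c: "in_polyring n c" and L: "L \<subseteq> {1..n}"
  have fL: "finite L" using L finite_subset by blast
  have "smult (emb (c * (f + g))) (theta L) = sadd (smult (emb (c * f)) (theta L)) (smult (emb (c * g)) (theta L))"
    using fL by (simp add: emb_theta distrib_left mon_add)
  then show "SI_B n (smult (emb (c * (f + g))) (theta L))"
    using f g c L by (auto intro: SI_B_sadd)
  have "smult (dd n (c * (f + g))) (theta L) = sadd (smult (dd n (c * f)) (theta L)) (smult (dd n (c * g)) (theta L))"
    using fL by (auto simp: dd_theta sadd_def distrib_left pd_add fun_eq_iff sum.distrib[symmetric] intro!: sum.cong)
  then show "SI_B n (smult (dd n (c * (f + g))) (theta L))"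
    using f g c L by (auto intro: SI_B_sadd)
qed

lemma in_polyring_uminus: "in_polyring n c \<Longrightarrow> in_polyring n (- c)"
  by (simp add: in_polyring_inpr inpr_uminus)

lemma in_polyring_mult: "in_polyring n c \<Longrightarrow> in_polyring n d \<Longrightarrow> in_polyring n (c * d)"
  by (simp add: in_polyring_inpr inpr_mult)

lemma Good_mult: "in_polyring n d \<Longrightarrow> Good n f \<Longrightarrow> Good n (d * f)"
  unfolding Good_def
proof (intro allI impI)
  fix c L assume d: "in_polyring n d" and f: "\<forall>c L. in_polyring n c \<longrightarrow> L \<subseteq> {1..n} \<longrightarrow>
     SI_B n (smult (emb (c * f)) (theta L)) \<and> SI_B n (smult (dd n (c * f)) (theta L))"
    and c: "in_polyring n c" and L: "L \<subseteq> {1..n}"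
  show "SI_B n (smult (emb (c * (d * f))) (theta L)) \<and> SI_B n (smult (dd n (c * (d * f))) (theta L))"
    using f[rule_format, OF in_polyring_mult[OF c d] L] by (simp add: mult.assoc)
qed

lemma Good_diff: "in_polyring n d \<Longrightarrow> Good n f \<Longrightarrow> Good n g \<Longrightarrow> Good n (f - d * g)"
  using Good_add[of n f "(- d) * g"] Good_mult[of n "- d" g] in_polyring_uminus[of n d] by simp

lemma Good_h2:
  assumes gen: "\<And>j. j \<ge> 1 \<Longrightarrow> Good n (h2 (int j) {1..n})"
  shows "S \<subseteq> {1..n} \<Longrightarrow> j \<ge> 1 \<Longrightarrow> n < j + card S \<Longrightarrow> Good n (h2 (int j) S)"
proof (induction "n - card S" arbitrary: S j)
  case 0
  then have "card S = card {1..n}" using card_mono[OF _ 0(2)] by simp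
  then have "S = {1..n}" using card_subset_eq[OF _ 0(2)] by simp
  then show ?case using gen 0 by simp
next
  case (Suc d)
  have cS: "card S < n" using Suc(2) by simp
  then have "S \<noteq> {1..n}" by auto
  then obtain t where t: "t \<in> {1..n}" "t \<notin> S" using Suc(3) by blast
  have fS: "finite S" using Suc(3) finite_subset by blast
  have cI: "card (insert t S) = Suc (card S)" using fS t by simp
  have j2: "j \<ge> 2" using Suc(4,5) cS by linarith
  have g1: "Good n (h2 (int j) (insert t S))"
    by (rule Suc(1)) (use Suc(2-5) cI t in auto)
  have g2: "Good n (h2 (int (j - 1)) (insert t S))"
    by (rule Suc(1)) (use Suc(2-5) cI t j2 in auto)
  have "in_polyring n (Var t ^ 2)" using t by (simp add: in_polyring_inpr inpr_power inpr_Var)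
  then show ?case
    unfolding h2_step[OF fS t(2) Suc(4)] by (rule Good_diff[OF _ g1 g2])
qed

section \<open>Signed permutations\<close>

lemma sp_dom:
  assumes "signed_perm n \<pi>" "i \<in> {1..n}"
  shows "1 \<le> \<bar>\<pi> (int i)\<bar> \<and> \<bar>\<pi> (int i)\<bar> \<le> int n"
proof -
  have "int i \<in> {i. 1 \<le> \<bar>i\<bar> \<and> \<bar>i\<bar> \<le> int n}" using assms(2) by auto
  then show ?thesis using bij_betw_apply[OF conjunct1[OF assms(1)[unfolded signed_perm_def]]] by auto
qed

definition tau :: "(int \<Rightarrow> int) \<Rightarrow> nat \<Rightarrow> nat" where
  "tau \<pi> i = nat \<bar>\<pi> (int i)\<bar>"

definition sg :: "(int \<Rightarrow> int) \<Rightarrow> nat \<Rightarrow> mpoly" where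
  "sg \<pi> i = (if \<pi> (int i) > 0 then 1 else -1)"

lemma tau_in: "signed_perm n \<pi> \<Longrightarrow> i \<in> {1..n} \<Longrightarrow> tau \<pi> i \<in> {1..n}"
  using sp_dom[of n \<pi> i] by (auto simp: tau_def)

lemma tau_inj: assumes "signed_perm n \<pi>" shows "inj_on (tau \<pi>) {1..n}"
proof
  fix i j assume i: "i \<in> {1..n}" and j: "j \<in> {1..n}" and eq: "tau \<pi> i = tau \<pi> j"
  let ?D = "{i. 1 \<le> \<bar>i\<bar> \<and> \<bar>i\<bar> \<le> int n}"
  have inj: "inj_on \<pi> ?D" using assms unfolding signed_perm_def by (auto dest: bij_betw_imp_inj_on)
  have neg: "\<pi> (- int j) = - \<pi> (int j)" using assms j unfolding signed_perm_def by auto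
  have ab: "\<bar>\<pi> (int i)\<bar> = \<bar>\<pi> (int j)\<bar>" using eq sp_dom[OF assms i] sp_dom[OF assms j] by (simp add: tau_def)
  have iD: "int i \<in> ?D" and jD: "int j \<in> ?D" and mjD: "- int j \<in> ?D" using i j by auto
  show "i = j"
  proof (cases "\<pi> (int i) = \<pi> (int j)")
    case True then show ?thesis using inj_onD[OF inj True iD jD] by simp
  next
    case False
    then have "\<pi> (int i) = \<pi> (- int j)" using ab neg by (auto simp: abs_if split: if_splits)
    then have "int i = - int j" using inj_onD[OF inj _ iD mjD] by simp
    then show ?thesis using i j by simp
  qed
qed

lemma tau_surj: assumes "signed_perm n \<pi>" shows "tau \<pi> ` {1..n} = {1..n}"
  by (rule endo_inj_surj) (use tau_in[OF assms] tau_inj[OF assms] in auto)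

lemma xvar_pi: "signed_perm n \<pi> \<Longrightarrow> i \<in> {1..n} \<Longrightarrow> xvar (\<pi> (int i)) = sg \<pi> i * Var (tau \<pi> i)"
  using sp_dom[of n \<pi> i] by (auto simp: xvar_def sg_def tau_def)

lemma thvar_pi: "signed_perm n \<pi> \<Longrightarrow> i \<in> {1..n} \<Longrightarrow> thvar (\<pi> (int i)) K = sg \<pi> i * theta {tau \<pi> i} K"
  using sp_dom[of n \<pi> i] by (auto simp: thvar_def sg_def tau_def sneg_def)

lemma sg_pm: "sg \<pi> i = 1 \<or> sg \<pi> i = -1" by (simp add: sg_def)
lemma sg_sq: "sg \<pi> i * sg \<pi> i = 1" by (simp add: sg_def)

section \<open>Action\<close>

lemma act_emb: "act n \<pi> (emb g) = emb (subst (\<lambda>i. xvar (\<pi> (int i))) g)"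
proof
  fix K
  let ?\<sigma> = "\<lambda>i. xvar (\<pi> (int i))"
  show "act n \<pi> (emb g) K = emb (subst ?\<sigma> g) K"
  proof (cases "finite K")
    case False
    then show ?thesis by (auto simp: act_def smult_inf emb_def)
  next
    case True
    have "act n \<pi> (emb g) K = (\<Sum>J\<in>Pow {1..n}. if J = {} then subst ?\<sigma> g * theta {} K else 0)"
      unfolding act_def smult_emb[OF True] by (intro sum.cong refl) (auto simp: emb_def)
    also have "\<dots> = emb (subst ?\<sigma> g) K" by (simp add: sum.delta' theta_def emb_def)
    finally show ?thesis .
  qed
qed

lemma act_dd:
  assumes "finite K"
  shows "act n \<pi> (dd n f) K = (\<Sum>l\<in>{1..n}. subst (\<lambda>i. xvar (\<pi> (int i))) (pd l f) * thvar (\<pi> (int l)) K)"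
proof -
  let ?\<sigma> = "\<lambda>i. xvar (\<pi> (int i))"
  have "act n \<pi> (dd n f) K = (\<Sum>J\<in>Pow {1..n}. \<Sum>l\<in>{1..n}. if J = {l} then subst ?\<sigma> (pd l f) * thvar (\<pi> (int l)) K else 0)"
    unfolding act_def
  proof (intro sum.cong refl)
    fix J assume J: "J \<in> Pow {1..n}"
    show "smult (emb (subst ?\<sigma> (dd n f J))) (foldr smult (map (\<lambda>j. thvar (\<pi> (int j))) (sorted_list_of_set J)) (theta {})) K
       = (\<Sum>l\<in>{1..n}. if J = {l} then subst ?\<sigma> (pd l f) * thvar (\<pi> (int l)) K else 0)"
    proof (cases "\<exists>l\<in>{1..n}. J = {l}")
      case True
      then obtain l where l: "l \<in> {1..n}" "J = {l}" by blast
      have "dd n f J = pd l f"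
        unfolding dd_apply using l by (simp add: sum.delta)
      moreover have "(\<Sum>l'\<in>{1..n}. if J = {l'} then subst ?\<sigma> (pd l' f) * thvar (\<pi> (int l')) K else 0)
          = subst ?\<sigma> (pd l f) * thvar (\<pi> (int l)) K"
        using l by (simp add: sum.delta)
      ultimately show ?thesis using l assms by (simp add: smult_emb smult_theta0)
    next
      case False
      then have "dd n f J = 0" unfolding dd_apply by (intro sum.neutral) auto
      then show ?thesis using False unfolding smult_emb[OF assms] by (auto intro!: sum.neutral[symmetric])
    qed
  qed
  also have "\<dots> = (\<Sum>l\<in>{1..n}. \<Sum>J\<in>Pow {1..n}. if J = {l} then subst ?\<sigma> (pd l f) * thvar (\<pi> (int l)) K else 0)"
    by (rule sum.swap)
  also have "\<dots> = (\<Sum>l\<in>{1..n}. subst ?\<sigma> (pd l f) * thvar (\<pi> (int l)) K)"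
    by (intro sum.cong refl) (simp add: sum.delta')
  finally show ?thesis .
qed

lemma h2_full_subst:
  assumes "signed_perm n \<pi>"
  shows "subst (\<lambda>i. xvar (\<pi> (int i))) (h2 (int j) {1..n}) = h2 (int j) {1..n}"
proof -
  have "subst (\<lambda>i. xvar (\<pi> (int i))) (h2 (int j) {1..n}) = h2 (int j) (tau \<pi> ` {1..n})"
  proof (rule h2_subst)
    show "inj_on (tau \<pi>) {1..n}" by (rule tau_inj[OF assms])
    fix t assume "t \<in> {1..n}"
    then show "xvar (\<pi> (int t)) ^ 2 = Var (tau \<pi> t) ^ 2"
      using xvar_pi[OF assms] sg_sq[of \<pi> t] by (simp add: power2_eq_square algebra_simps)
  qed auto
  then show ?thesis using tau_surj[OF assms] by simp
qed

lemma in_polyring_h2: "in_polyring n (h2 (int j) {1..n})"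
  by (simp add: in_polyring_inpr h2_inpr)

lemma B_inv_emb: "B_invariant n (emb (h2 (int j) {1..n}))"
  unfolding B_invariant_def
proof (intro conjI allI impI)
  show "omega n (emb (h2 (int j) {1..n}))" by (rule omega_emb[OF in_polyring_h2])
  fix \<pi> assume "signed_perm n \<pi>"
  show "act n \<pi> (emb (h2 (int j) {1..n})) = emb (h2 (int j) {1..n})"
    unfolding act_emb h2_full_subst[OF \<open>signed_perm n \<pi>\<close>] by (rule refl)
qed

lemma B_inv_dd: "B_invariant n (dd n (h2 (int j) {1..n}))"
  unfolding B_invariant_def
proof (intro conjI allI impI)
  let ?h = "h2 (int j) {1..n}"
  show "omega n (dd n ?h)" by (rule omega_dd[OF in_polyring_h2])
  fix \<pi> assume sp: "signed_perm n \<pi>"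
  let ?\<sigma> = "\<lambda>i. xvar (\<pi> (int i))"
  show "act n \<pi> (dd n ?h) = dd n ?h"
  proof
    fix K
    show "act n \<pi> (dd n ?h) K = dd n ?h K"
    proof (cases "finite K")
      case False
      then show ?thesis by (auto simp: act_def smult_inf dd_apply intro!: sum.neutral)
    next
      case True
      have tm: "subst ?\<sigma> (pd l ?h) * thvar (\<pi> (int l)) K = pd (tau \<pi> l) ?h * theta {tau \<pi> l} K"
        if l: "l \<in> {1..n}" for l
      proof -
        have "CR ?\<sigma> (tau \<pi>) (sg \<pi> l) l ?h"
          by (rule CR_h2[where V="{1..n}"]) (use l tau_inj[OF sp] xvar_pi[OF sp] sg_pm in auto)
        then have "pd (tau \<pi> l) ?h = sg \<pi> l * subst ?\<sigma> (pd l ?h)"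
          unfolding CR_def h2_full_subst[OF sp] .
        then have e: "sg \<pi> l * pd (tau \<pi> l) ?h = subst ?\<sigma> (pd l ?h)"
          by (simp add: mult.assoc[symmetric] sg_sq)
        have "subst ?\<sigma> (pd l ?h) * thvar (\<pi> (int l)) K = (sg \<pi> l * pd (tau \<pi> l) ?h) * (sg \<pi> l * theta {tau \<pi> l} K)"
          unfolding e thvar_pi[OF sp l] ..
        also have "\<dots> = (sg \<pi> l * sg \<pi> l) * pd (tau \<pi> l) ?h * theta {tau \<pi> l} K"
          by (simp only: mult_ac)
        finally show ?thesis unfolding sg_sq by simp
      qed
      have "act n \<pi> (dd n ?h) K = (\<Sum>l\<in>{1..n}. pd (tau \<pi> l) ?h * theta {tau \<pi> l} K)"
        using act_dd[OF True] tm by simp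
      also have "\<dots> = (\<Sum>t\<in>tau \<pi> ` {1..n}. pd t ?h * theta {t} K)"
        by (rule sum.reindex[OF tau_inj[OF sp], symmetric, unfolded comp_def])
      also have "\<dots> = dd n ?h K"
        unfolding tau_surj[OF sp] dd_apply by (intro sum.cong refl) (simp add: theta_def)
      finally show ?thesis .
    qed
  qed
qed

lemma Good_gen: "j \<ge> 1 \<Longrightarrow> Good n (h2 (int j) {1..n})"
  by (rule Good_from_gen[OF B_inv_emb _ B_inv_dd _ in_polyring_h2])
     (auto simp: const_term_def emb_def dd_apply h2_const)

section \<open>Gale order\<close>

lemma sorted_nth_le_iff:
  assumes A: "finite A" and s: "s < card A"
  shows "sorted_list_of_set A ! s \<le> x \<longleftrightarrow> s < card {a\<in>A. a \<le> (x::nat)}"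
proof -
  define xs where "xs = sorted_list_of_set A"
  have so: "sorted xs" and di: "distinct xs" and se: "set xs = A" and le: "length xs = card A"
    using A by (auto simp: xs_def)
  have fin: "finite {a\<in>A. a \<le> x}" using A by simp
  show ?thesis unfolding xs_def[symmetric]
  proof
    assume h: "xs ! s \<le> x"
    have "(!) xs ` {0..s} \<subseteq> {a\<in>A. a \<le> x}"
    proof
      fix b assume "b \<in> (!) xs ` {0..s}"
      then obtain k where k: "k \<le> s" "b = xs ! k" by auto
      have sl: "s < length xs" using s le by simp
      have kl: "k < length xs" using k(1) sl by linarith
      have "xs ! k \<le> xs ! s" using sorted_nth_mono[OF so k(1) sl] .
      moreover have "xs ! k \<in> A" using nth_mem[OF kl] se by blast
      ultimately show "b \<in> {a\<in>A. a \<le> x}" using k(2) h by simp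
    qed
    moreover have "card ((!) xs ` {0..s}) = Suc s"
    proof -
      have "inj_on ((!) xs) {0..s}" using di s le by (auto simp: inj_on_def nth_eq_iff_index_eq)
      then show ?thesis by (simp add: card_image)
    qed
    ultimately have "Suc s \<le> card {a\<in>A. a \<le> x}" using card_mono[OF fin] by metis
    then show "s < card {a\<in>A. a \<le> x}" by simp
  next
    assume h: "s < card {a\<in>A. a \<le> x}"
    show "xs ! s \<le> x"
    proof (rule ccontr)
      assume "\<not> xs ! s \<le> x"
      then have gt: "x < xs ! s" by simp
      have "{a\<in>A. a \<le> x} \<subseteq> (!) xs ` {0..<s}"
      proof
        fix a assume a: "a \<in> {a\<in>A. a \<le> x}"
        then obtain k where k: "k < length xs" "a = xs ! k" using se by (auto simp: in_set_conv_nth)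
        have "k < s"
        proof (rule ccontr)
          assume "\<not> k < s"
          then have "xs ! s \<le> xs ! k" using sorted_nth_mono[OF so _ k(1), of s] by linarith
          then show False using a k gt by simp
        qed
        then show "a \<in> (!) xs ` {0..<s}" using k by auto
      qed
      then have "card {a\<in>A. a \<le> x} \<le> card ((!) xs ` {0..<s})"
        by (intro card_mono) auto
      also have "\<dots> \<le> card {0..<s}" by (rule card_image_le) simp
      finally have "card {a\<in>A. a \<le> x} \<le> s" by simp
      then show False using h by simp
    qed
  qed
qed

lemma gale_counts:
  assumes "finite A" "finite B" "card A = card B"
    "\<And>x. card {b\<in>B. b \<le> x} \<le> card {a\<in>A. a \<le> (x::nat)}"
  shows "gale A B"
  unfolding gale_def
proof (intro conjI allI impI)
  show "card A = card B" by fact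
  fix s assume s: "s < card A"
  let ?b = "sorted_list_of_set B ! s"
  have "s < card {b\<in>B. b \<le> ?b}" using sorted_nth_le_iff[OF assms(2), of s ?b] s assms(3) by simp
  then have "s < card {a\<in>A. a \<le> ?b}" using assms(4)[of ?b] by linarith
  then show "sorted_list_of_set A ! s \<le> ?b" using sorted_nth_le_iff[OF assms(1) s] by simp
qed

lemma gale_swap:
  assumes J: "finite J" and i: "i \<in> J" and l: "l \<notin> J" and il: "i \<le> l"
  shows "gale J (insert l (J - {i}))"
proof (rule gale_counts)
  show "finite J" "finite (insert l (J - {i}))" using J by auto
  have "card J > 0" using J i card_gt_0_iff by blast
  then show "card J = card (insert l (J - {i}))" using J i l by (simp add: card_Diff_singleton)
  fix x :: nat
  show "card {b\<in>insert l (J - {i}). b \<le> x} \<le> card {a\<in>J. a \<le> x}"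
  proof (cases "l \<le> x")
    case True
    have "{b\<in>insert l (J - {i}). b \<le> x} = insert l ({a\<in>J. a \<le> x} - {i})" using True by auto
    moreover have "i \<in> {a\<in>J. a \<le> x}" using i il True by auto
    moreover have "card {a\<in>J. a \<le> x} > 0" using \<open>i \<in> {a\<in>J. a \<le> x}\<close> J card_gt_0_iff by fastforce
    ultimately show ?thesis using J l by (simp add: card_Diff_singleton)
  next
    case False
    have "{b\<in>insert l (J - {i}). b \<le> x} \<subseteq> {a\<in>J. a \<le> x}" using False by auto
    then show ?thesis using J by (intro card_mono) auto
  qed
qed

lemma gale_refl: "gale J J" by (simp add: gale_def)

lemma neg1_pow: "(-1::mpoly) ^ k = 1 \<or> (-1::mpoly) ^ k = -1"
  by (cases "even k") auto

theorem mainTheorem2: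
  fixes n i :: nat and J :: "nat set"
  assumes "n \<ge> 1" and "J \<subseteq> {1..n}" and "i \<in> {1..n}"
  shows "SI_B n (qq n J i)
       \<and> (\<forall>K. qq n J i K \<noteq> 0 \<longrightarrow> K \<subseteq> {1..n} \<and> card K = card J \<and> gale J K)
       \<and> (qq n J i J = pp n J i \<or> qq n J i J = - pp n J i)"
proof -
  define S where "S = J \<union> {i..n}"
  have SV: "S \<subseteq> {1..n}" using assms by (auto simp: S_def)
  have fS: "finite S" using SV finite_subset by blast
  have fJ: "finite J" using assms(2) finite_subset by blast
  have cS: "card S \<le> n" using card_mono[OF _ SV] by simp
  define j where "j = n - card S + 1"
  have rr: "rr n J i = int j" using cS by (simp add: rr_def j_def S_def)
  define h where "h = h2 (int j) S"
  have G: "Good n h" unfolding h_def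
    by (rule Good_h2[OF Good_gen SV]) (use cS in \<open>auto simp: j_def\<close>)
  have c1: "in_polyring n 1" by (simp add: in_polyring_inpr)
  show ?thesis
  proof (cases "i \<in> J")
    case False
    have q: "qq n J i = smult (emb h) (theta J)" using False by (simp add: qq_def rr h_def S_def)
    have p: "pp n J i = h" using False by (simp add: pp_def rr h_def S_def)
    have q': "qq n J i = mon J h" using q emb_theta[OF fJ] by simp
    have "SI_B n (qq n J i)" using G c1 assms(2) unfolding Good_def q by (metis mult_1)
    moreover have "\<forall>K. qq n J i K \<noteq> 0 \<longrightarrow> K \<subseteq> {1..n} \<and> card K = card J \<and> gale J K"
      using assms(2) by (auto simp: q' mon_def gale_refl split: if_splits)
    moreover have "qq n J i J = pp n J i" by (simp add: q' p mon_def)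
    ultimately show ?thesis by blast
  next
    case True
    let ?L = "J - {i}"
    have fL: "finite ?L" using fJ by simp
    have q: "qq n J i = smult (dd n h) (theta ?L)" using True by (simp add: qq_def rr h_def S_def)
    have p: "pp n J i = pd i h" using True by (simp add: pp_def rr h_def S_def)
    have qK: "qq n J i K = (\<Sum>l\<in>{1..n}. if l \<in> K \<and> K - {l} = ?L then of_int (ssign {l} ?L) * pd l h else 0)" for K
      unfolding q by (rule dd_theta[OF fL])
    have "SI_B n (qq n J i)" using G c1 assms(2) unfolding Good_def q
      by (metis mult_1 Diff_subset order_trans)
    moreover have "\<forall>K. qq n J i K \<noteq> 0 \<longrightarrow> K \<subseteq> {1..n} \<and> card K = card J \<and> gale J K"
    proof (intro allI impI)
      fix K assume nz: "qq n J i K \<noteq> 0"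
      have "\<exists>l\<in>{1..n}. (if l \<in> K \<and> K - {l} = ?L then of_int (ssign {l} ?L) * pd l h else 0) \<noteq> 0"
      proof (rule ccontr)
        assume "\<not> ?thesis"
        then have "qq n J i K = 0" unfolding qK by (intro sum.neutral) blast
        then show False using nz by simp
      qed
      then obtain l where l: "l \<in> {1..n}" "l \<in> K" "K - {l} = ?L" "pd l h \<noteq> 0"
        by (auto split: if_splits)
      have "l \<in> S"
      proof (rule ccontr)
        assume "l \<notin> S"
        then have "pd l h = 0" unfolding h_def by (rule pd_notin[OF h2_inpr[OF order_refl]])
        then show False using l by simp
      qed
      have K: "K = insert l ?L" using l by auto
      have lL: "l \<notin> ?L" using l by auto
      show "K \<subseteq> {1..n} \<and> card K = card J \<and> gale J K"
      proof (cases "l = i")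
        case True
        then have "K = J" using K \<open>i \<in> J\<close> by auto
        then show ?thesis using assms(2) gale_refl by simp
      next
        case False
        then have lJ: "l \<notin> J" and il: "i \<le> l" using lL \<open>l \<in> S\<close> by (auto simp: S_def)
        have g: "gale J K" unfolding K by (rule gale_swap[OF fJ \<open>i \<in> J\<close> lJ il])
        have "card J > 0" using fJ \<open>i \<in> J\<close> card_gt_0_iff by blast
        then have "card K = card J" unfolding K using fJ lL \<open>i \<in> J\<close> by (simp add: card_Diff_singleton)
        moreover have "K \<subseteq> {1..n}" unfolding K using assms(2) l(1) by auto
        ultimately show ?thesis using g by simp
      qed
    qed
    moreover have "qq n J i J = of_int (ssign {i} ?L) * pd i h"
    proof -
      have "qq n J i J = (\<Sum>l\<in>{1..n}. if l = i then of_int (ssign {i} ?L) * pd i h else 0)"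
        unfolding qK using \<open>i \<in> J\<close> by (intro sum.cong refl) auto
      then show ?thesis using assms(3) by simp
    qed
    moreover have "(of_int (ssign {i} ?L) :: mpoly) = 1 \<or> of_int (ssign {i} ?L) = (-1 :: mpoly)"
      unfolding ssign_def of_int_power of_int_minus of_int_1 by (rule neg1_pow)
    ultimately show ?thesis using p by auto
  qed
qed

end
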